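(* Let $S,T\subseteq\mathrm{Var}$ be disjoint finite sets, $\mu_1\in\mathcal{D}(\mathrm{Mem}[S])$ and $\mu_2\in\mathcal{D}(\mathrm{Mem}[T])$. Let $\mathcal{S}$ be a partition of a subset of $S$ and $\mathcal{T}$ a partition of a subset of $T$. If $\mu_1$ is $\mathcal{S}$-PNA and $\mu_2$ is $\mathcal{T}$-PNA, then every $\mu\in\mu_1\otimes\mu_2$ is $(\mathcal{S}\cup\mathcal{T})$-PNA. Consequently $\mu_1\otimes\mu_2\subseteq\mu_1\oplus\mu_2$ for all $\mu_1,\mu_2\in X$.
   Context: Fix a set $\mathrm{Var}$ of variables; values are real numbers. For finite $S\subseteq\mathrm{Var}$, $\mathrm{Mem}[S]$ is the set of maps $S\to\mathbb{R}$, ordered pointwise; $p_A(m)$ is restriction. $\mathcal{D}(Y)$ denotes countably supported probability distributions on $Y$; for $\mu\in\mathcal{D}(\mathrm{Mem}[S])$, $\mathrm{dom}(\mu)=S$ and $\pi_A\mu$ is the marginal on $A$. $X=\bigcup_{S\text{ finite}}\mathcal{D}(\mathrm{Mem}[S])$. For $\mu_1\in\mathcal{D}(\mathrm{Mem}[S])$, $\mu_2\in\mathcal{D}(\mathrm{Mem}[T])$, the independent product $\mu_1\otimes\mu_2$ is $\emptyset$ if $S\cap T\ne\emptyset$, and otherwise the singleton set of the $\mu\in\mathcal{D}(\mathrm{Mem}[S\cup T])$ with $\mu(x)=\mu_1(p_Sx)\mu_2(p_Tx)$. A partition is a set of pairwise disjoint nonempty sets; $\mathcal{T}$ coarsens $\mathcal{S}$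 if $\bigcup\mathcal{T}=\bigcup\mathcal{S}$ and each element of $\mathcal{T}$ is a union of a subfamily of $\mathcal{S}$. For a partition $\mathcal{S}$ with $\bigcup\mathcal{S}\subseteq\mathrm{dom}(\mu)$, $\mu$ is $\mathcal{S}$-PNA if for every $\mathcal{T}$ coarsening $\mathcal{S}$ and every family $(f_A:\mathrm{Mem}[A]\to[0,\infty))_{A\in\mathcal{T}}$ all non-decreasing or all non-increasing, $\mathbb{E}_{m\sim\mu}[\prod_Af_A(p_Am)]\le\prod_A\mathbb{E}_{m\sim\mu}[f_A(p_Am)]$. $\mu_1\oplus\mu_2$ is empty if $S\cap T\neq\emptyset$ and otherwise is the set of $\mu\in\mathcal{D}(\mathrm{Mem}[S\cup T])$ with $\pi_S\mu=\mu_1$, $\pi_T\mu=\mu_2$ such that $\mu$ is $(\mathcal{S}\cup\mathcal{T})$-PNA for all partitions $\mathcal{S}$ of a subset of $S$ and $\mathcal{T}$ of a subset of $T$ with $\mu_1$ $\mathcal{S}$-PNA and $\mu_2$ $\mathcal{T}$-PNA. *)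

theory Defs
  imports "HOL-Probability.Probability_Mass_Function"
begin

(* Mem[S] (maps S -> real) is represented by total functions 'v => real that
   vanish outside S; the pointwise order on Mem[S] is the order on functions. *)
definition Mem :: "'v set \<Rightarrow> ('v \<Rightarrow> real) set" where
  "Mem S = {m. \<forall>x. x \<notin> S \<longrightarrow> m x = 0}"

definition proj :: "'v set \<Rightarrow> ('v \<Rightarrow> real) \<Rightarrow> ('v \<Rightarrow> real)" where
  "proj A m = (\<lambda>x. if x \<in> A then m x else 0)"

(* An element of X: a pair (dom mu, mu) with mu a countably supported
   probability distribution (pmf) on Mem[dom mu]. *)
definition Xdist :: "('v set \<times> ('v \<Rightarrow> real) pmf) set" where
  "Xdist = {(S, p). finite S \<and> set_pmf p \<subseteq> Mem S}"

definition is_partition :: "'v set set \<Rightarrow> bool" where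
  "is_partition P \<longleftrightarrow> (\<forall>A\<in>P. A \<noteq> {}) \<and> (\<forall>A\<in>P. \<forall>B\<in>P. A \<noteq> B \<longrightarrow> A \<inter> B = {})"

definition coarsens :: "'v set set \<Rightarrow> 'v set set \<Rightarrow> bool" where
  "coarsens TT SS \<longleftrightarrow> is_partition TT \<and> \<Union>TT = \<Union>SS \<and>
     (\<forall>A\<in>TT. \<exists>F\<subseteq>SS. A = \<Union>F)"

definition nondec_on :: "'v set \<Rightarrow> (('v \<Rightarrow> real) \<Rightarrow> real) \<Rightarrow> bool" where
  "nondec_on A f \<longleftrightarrow> (\<forall>m\<in>Mem A. 0 \<le> f m) \<and>
     (\<forall>m\<in>Mem A. \<forall>m'\<in>Mem A. m \<le> m' \<longrightarrow> f m \<le> f m')"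

definition noninc_on :: "'v set \<Rightarrow> (('v \<Rightarrow> real) \<Rightarrow> real) \<Rightarrow> bool" where
  "noninc_on A f \<longleftrightarrow> (\<forall>m\<in>Mem A. 0 \<le> f m) \<and>
     (\<forall>m\<in>Mem A. \<forall>m'\<in>Mem A. m \<le> m' \<longrightarrow> f m' \<le> f m)"

(* mu (with domain S) is SS-PNA; expectations of nonnegative functions are
   nonnegative Lebesgue integrals (values in [0,\<infinity>]). *)
definition PNA :: "'v set \<Rightarrow> ('v \<Rightarrow> real) pmf \<Rightarrow> 'v set set \<Rightarrow> bool" where
  "PNA S p SS \<longleftrightarrow> is_partition SS \<and> \<Union>SS \<subseteq> S \<and>
     (\<forall>TT f. coarsens TT SS \<and>
        ((\<forall>A\<in>TT. nondec_on A (f A)) \<or> (\<forall>A\<in>TT. noninc_on A (f A))) \<longrightarrow>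
        (\<integral>\<^sup>+ m. (\<Prod>A\<in>TT. ennreal (f A (proj A m))) \<partial>measure_pmf p)
          \<le> (\<Prod>A\<in>TT. \<integral>\<^sup>+ m. ennreal (f A (proj A m)) \<partial>measure_pmf p))"

definition indep_prod ::
  "'v set \<times> ('v \<Rightarrow> real) pmf \<Rightarrow> 'v set \<times> ('v \<Rightarrow> real) pmf \<Rightarrow> ('v set \<times> ('v \<Rightarrow> real) pmf) set" where
  "indep_prod mu1 mu2 = (let S = fst mu1; T = fst mu2 in
     if S \<inter> T \<noteq> {} then {} else
     {(S \<union> T, p) | p. set_pmf p \<subseteq> Mem (S \<union> T) \<and>
        (\<forall>x\<in>Mem (S \<union> T). pmf p x = pmf (snd mu1) (proj S x) * pmf (snd mu2) (proj T x))})"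

definition oplus ::
  "'v set \<times> ('v \<Rightarrow> real) pmf \<Rightarrow> 'v set \<times> ('v \<Rightarrow> real) pmf \<Rightarrow> ('v set \<times> ('v \<Rightarrow> real) pmf) set" where
  "oplus mu1 mu2 = (let S = fst mu1; T = fst mu2 in
     if S \<inter> T \<noteq> {} then {} else
     {(S \<union> T, p) | p. set_pmf p \<subseteq> Mem (S \<union> T) \<and>
        map_pmf (proj S) p = snd mu1 \<and> map_pmf (proj T) p = snd mu2 \<and>
        (\<forall>SS TT. is_partition SS \<and> \<Union>SS \<subseteq> S \<and> is_partition TT \<and> \<Union>TT \<subseteq> T \<and>
           PNA S (snd mu1) SS \<and> PNA T (snd mu2) TT \<longrightarrow> PNA (S \<union> T) p (SS \<union> TT))})"

end

theory Submission imports Defs begin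

lemma PNA_D: "PNA S p SS \<Longrightarrow> is_partition SS \<and> \<Union>SS \<subseteq> S"
  unfolding PNA_def by (elim conjE) (intro conjI; assumption)

lemma part_ne: "is_partition P \<Longrightarrow> A \<in> P \<Longrightarrow> A \<noteq> {}"
  unfolding is_partition_def by simp
lemma part_dis: "is_partition P \<Longrightarrow> A \<in> P \<Longrightarrow> B \<in> P \<Longrightarrow> A \<noteq> B \<Longrightarrow> A \<inter> B = {}"
  unfolding is_partition_def by simp

lemma Mem_mono: "A \<subseteq> B \<Longrightarrow> Mem A \<subseteq> Mem B"
  unfolding Mem_def by auto

lemma proj_Mem: "proj C m \<in> Mem C"
  unfolding proj_def Mem_def by auto

lemma proj_mono: "m \<le> m' \<Longrightarrow> proj C m \<le> proj C m'"
  unfolding proj_def le_fun_def by auto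

lemma proj_empty: "proj {} m = (\<lambda>x. 0)"
  unfolding proj_def by auto

lemma lemL:
  fixes S0 :: "'v set" and q :: "('v\<Rightarrow>real) pmf" and SS0 U :: "'v set set"
    and \<phi> :: "'v set \<Rightarrow> ('v\<Rightarrow>real) \<Rightarrow> real"
  assumes pna: "PNA S0 q SS0"
  and supp: "set_pmf q \<subseteq> Mem S0"
  and part: "is_partition U" and fin: "finite U"
  and un: "\<Union>U \<inter> S0 = \<Union>SS0"
  and sub: "\<forall>C\<in>U. \<exists>F\<subseteq>SS0. C \<inter> S0 = \<Union>F"
  and inv: "\<forall>C\<in>U. \<forall>a\<in>Mem S0. \<phi> C a = \<phi> C (proj (C \<inter> S0) a)"
  and nn: "\<forall>C\<in>U. \<forall>a\<in>Mem S0. 0 \<le> \<phi> C a"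
  and mono: "(\<forall>C\<in>U. \<forall>a\<in>Mem S0. \<forall>a'\<in>Mem S0. a \<le> a' \<longrightarrow> \<phi> C a \<le> \<phi> C a')
     \<or> (\<forall>C\<in>U. \<forall>a\<in>Mem S0. \<forall>a'\<in>Mem S0. a \<le> a' \<longrightarrow> \<phi> C a' \<le> \<phi> C a)"
  shows "(\<integral>\<^sup>+a. (\<Prod>C\<in>U. ennreal (\<phi> C a)) \<partial>q) \<le> (\<Prod>C\<in>U. \<integral>\<^sup>+a. ennreal (\<phi> C a) \<partial>q)"
proof -
  define U0 where "U0 = {C\<in>U. C \<inter> S0 = {}}"
  define Up where "Up = {C\<in>U. C \<inter> S0 \<noteq> {}}"
  define U1 where "U1 = (\<lambda>C. C \<inter> S0) ` Up"
  define cs where "cs D = (SOME C. C \<in> Up \<and> C \<inter> S0 = D)" for D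
  define g where "g D = \<phi> (cs D)" for D
  define z :: "'v \<Rightarrow> real" where "z = (\<lambda>x. 0)"
  have Uun: "U = U0 \<union> Up" and Udis: "U0 \<inter> Up = {}" unfolding U0_def Up_def by auto
  have fin0: "finite U0" "finite Up" using fin unfolding U0_def Up_def by auto
  have inj: "inj_on (\<lambda>C. C \<inter> S0) Up"
  proof (rule inj_onI)
    fix C C' assume "C \<in> Up" "C' \<in> Up" "C \<inter> S0 = C' \<inter> S0"
    then have "C \<inter> C' \<noteq> {}" "C \<in> U" "C' \<in> U" unfolding Up_def by auto
    then show "C = C'" using part unfolding is_partition_def by blast
  qed
  have cs: "cs (C \<inter> S0) = C" if "C \<in> Up" for C
  proof -
    have "cs (C \<inter> S0) \<in> Up \<and> cs (C \<inter> S0) \<inter> S0 = C \<inter> S0"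
      unfolding cs_def by (rule someI[of _ C]) (use that in auto)
    then show ?thesis using inj that by (auto dest: inj_onD)
  qed
  have gC: "g (C \<inter> S0) = \<phi> C" if "C \<in> Up" for C using cs[OF that] g_def by simp
  have MemS0: "proj (C \<inter> S0) a \<in> Mem S0" for C a using proj_Mem Mem_mono[of "C \<inter> S0" S0] by blast
  have const0: "\<phi> C a = \<phi> C z" if "C \<in> U0" "a \<in> Mem S0" for C a
    using inv that unfolding U0_def z_def by (auto simp: proj_empty)
  define c where "c = (\<Prod>C\<in>U0. ennreal (\<phi> C z))"
  have split: "(\<Prod>C\<in>U. ennreal (\<phi> C a)) = c * (\<Prod>D\<in>U1. ennreal (g D (proj D a)))"
    if a: "a \<in> Mem S0" for a
  proof -
    have "(\<Prod>C\<in>U. ennreal (\<phi> C a)) = (\<Prod>C\<in>U0. ennreal (\<phi> C a)) * (\<Prod>C\<in>Up. ennreal (\<phi> C a))"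
      unfolding Uun using fin0 Udis by (rule prod.union_disjoint)
    also have "(\<Prod>C\<in>U0. ennreal (\<phi> C a)) = c" unfolding c_def
      using const0 a by (auto intro: prod.cong)
    also have "(\<Prod>C\<in>Up. ennreal (\<phi> C a)) = (\<Prod>D\<in>U1. ennreal (g D (proj D a)))"
    proof -
      have "(\<Prod>D\<in>U1. ennreal (g D (proj D a))) = (\<Prod>C\<in>Up. ennreal (g (C \<inter> S0) (proj (C \<inter> S0) a)))"
        unfolding U1_def using inj by (simp add: prod.reindex o_def)
      also have "\<dots> = (\<Prod>C\<in>Up. ennreal (\<phi> C a))"
        using gC inv a unfolding Up_def by (auto intro!: prod.cong)
      finally show ?thesis by simp
    qed
    finally show ?thesis by simp
  qed
  have lhs: "(\<integral>\<^sup>+a. (\<Prod>C\<in>U. ennreal (\<phi> C a)) \<partial>q) = c * (\<integral>\<^sup>+a. (\<Prod>D\<in>U1. ennreal (g D (proj D a))) \<partial>q)"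
  proof -
    have "(\<integral>\<^sup>+a. (\<Prod>C\<in>U. ennreal (\<phi> C a)) \<partial>q) = (\<integral>\<^sup>+a. c * (\<Prod>D\<in>U1. ennreal (g D (proj D a))) \<partial>q)"
      using split supp by (intro nn_integral_cong_AE AE_pmfI) auto
    also have "\<dots> = c * (\<integral>\<^sup>+a. (\<Prod>D\<in>U1. ennreal (g D (proj D a))) \<partial>q)"
      by (rule nn_integral_cmult) simp
    finally show ?thesis .
  qed
  have U1sub: "D \<subseteq> S0" if "D \<in> U1" for D using that unfolding U1_def by auto
  have coars: "coarsens U1 SS0"
    unfolding coarsens_def
  proof (intro conjI)
    show "is_partition U1" unfolding is_partition_def
    proof (intro conjI ballI impI)
      fix A assume "A \<in> U1" then show "A \<noteq> {}" unfolding U1_def Up_def by auto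
    next
      fix A B assume "A \<in> U1" "B \<in> U1" "A \<noteq> B"
      then obtain C C' where "C \<in> U" "C' \<in> U" "A = C \<inter> S0" "B = C' \<inter> S0" "C \<noteq> C'"
        unfolding U1_def Up_def by auto
      then show "A \<inter> B = {}" using part unfolding is_partition_def by blast
    qed
    show "\<Union>U1 = \<Union>SS0" unfolding un[symmetric] U1_def Up_def by blast
    show "\<forall>A\<in>U1. \<exists>F\<subseteq>SS0. A = \<Union>F" using sub unfolding U1_def Up_def by auto
  qed
  have dir: "(\<forall>A\<in>U1. nondec_on A (g A)) \<or> (\<forall>A\<in>U1. noninc_on A (g A))"
  proof -
    have M: "Mem A \<subseteq> Mem S0" if "A \<in> U1" for A using Mem_mono[OF U1sub[OF that]] .
    have N: "\<forall>m\<in>Mem A. 0 \<le> g A m" if "A \<in> U1" for A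
    proof -
      obtain C where "C \<in> Up" "A = C \<inter> S0" using \<open>A \<in> U1\<close> unfolding U1_def by auto
      then show ?thesis using gC nn M[OF that] unfolding Up_def by auto
    qed
    from mono show ?thesis
    proof
      assume h: "\<forall>C\<in>U. \<forall>a\<in>Mem S0. \<forall>a'\<in>Mem S0. a \<le> a' \<longrightarrow> \<phi> C a \<le> \<phi> C a'"
      have "nondec_on A (g A)" if "A \<in> U1" for A
      proof -
        obtain C where "C \<in> Up" "A = C \<inter> S0" using \<open>A \<in> U1\<close> unfolding U1_def by auto
        then show ?thesis unfolding nondec_on_def using N[OF that] h gC M[OF that] unfolding Up_def
          by (metis (mono_tags, lifting) mem_Collect_eq subsetD)
      qed
      then show ?thesis by blast
    next
      assume h: "\<forall>C\<in>U. \<forall>a\<in>Mem S0. \<forall>a'\<in>Mem S0. a \<le> a' \<longrightarrow> \<phi> C a' \<le> \<phi> C a"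
      have "noninc_on A (g A)" if "A \<in> U1" for A
      proof -
        obtain C where "C \<in> Up" "A = C \<inter> S0" using \<open>A \<in> U1\<close> unfolding U1_def by auto
        then show ?thesis unfolding noninc_on_def using N[OF that] h gC M[OF that] unfolding Up_def
          by (metis (mono_tags, lifting) mem_Collect_eq subsetD)
      qed
      then show ?thesis by blast
    qed
  qed
  have pnaineq: "(\<integral>\<^sup>+a. (\<Prod>D\<in>U1. ennreal (g D (proj D a))) \<partial>q) \<le> (\<Prod>D\<in>U1. \<integral>\<^sup>+a. ennreal (g D (proj D a)) \<partial>q)"
  proof -
    have "\<forall>TT f. coarsens TT SS0 \<and>
        ((\<forall>A\<in>TT. nondec_on A (f A)) \<or> (\<forall>A\<in>TT. noninc_on A (f A))) \<longrightarrow>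
        (\<integral>\<^sup>+ m. (\<Prod>A\<in>TT. ennreal (f A (proj A m))) \<partial>measure_pmf q)
          \<le> (\<Prod>A\<in>TT. \<integral>\<^sup>+ m. ennreal (f A (proj A m)) \<partial>measure_pmf q)"
      using pna unfolding PNA_def by (elim conjE)
    then have "coarsens U1 SS0 \<and>
        ((\<forall>A\<in>U1. nondec_on A (g A)) \<or> (\<forall>A\<in>U1. noninc_on A (g A))) \<longrightarrow>
        (\<integral>\<^sup>+ m. (\<Prod>A\<in>U1. ennreal (g A (proj A m))) \<partial>measure_pmf q)
          \<le> (\<Prod>A\<in>U1. \<integral>\<^sup>+ m. ennreal (g A (proj A m)) \<partial>measure_pmf q)"
      by (rule spec[of _ g, OF spec[of _ U1]])
    then show ?thesis using coars dir by blast
  qed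
  have r1: "(\<Prod>D\<in>U1. \<integral>\<^sup>+a. ennreal (g D (proj D a)) \<partial>q) = (\<Prod>C\<in>Up. \<integral>\<^sup>+a. ennreal (\<phi> C a) \<partial>q)"
  proof -
    have "(\<Prod>D\<in>U1. \<integral>\<^sup>+a. ennreal (g D (proj D a)) \<partial>q) = (\<Prod>C\<in>Up. \<integral>\<^sup>+a. ennreal (g (C \<inter> S0) (proj (C \<inter> S0) a)) \<partial>q)"
      unfolding U1_def using inj by (simp add: prod.reindex o_def)
    also have "\<dots> = (\<Prod>C\<in>Up. \<integral>\<^sup>+a. ennreal (\<phi> C a) \<partial>q)"
    proof (rule prod.cong[OF refl])
      fix C assume C: "C \<in> Up"
      show "(\<integral>\<^sup>+a. ennreal (g (C \<inter> S0) (proj (C \<inter> S0) a)) \<partial>q) = (\<integral>\<^sup>+a. ennreal (\<phi> C a) \<partial>q)"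
        using gC[OF C] inv C supp unfolding Up_def by (intro nn_integral_cong_AE AE_pmfI) auto
    qed
    finally show ?thesis .
  qed
  have r0: "(\<Prod>C\<in>U0. \<integral>\<^sup>+a. ennreal (\<phi> C a) \<partial>q) = c"
  proof -
    have "(\<Prod>C\<in>U0. \<integral>\<^sup>+a. ennreal (\<phi> C a) \<partial>q) = (\<Prod>C\<in>U0. \<integral>\<^sup>+a. ennreal (\<phi> C z) \<partial>q)"
    proof (rule prod.cong[OF refl])
      fix C assume C: "C \<in> U0"
      show "(\<integral>\<^sup>+a. ennreal (\<phi> C a) \<partial>q) = (\<integral>\<^sup>+a. ennreal (\<phi> C z) \<partial>q)"
        using const0[OF C] supp by (intro nn_integral_cong_AE AE_pmfI) auto
    qed
    also have "\<dots> = c" unfolding c_def by (simp add: measure_pmf.emeasure_space_1)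
    finally show ?thesis .
  qed
  have "(\<integral>\<^sup>+a. (\<Prod>C\<in>U. ennreal (\<phi> C a)) \<partial>q) \<le> c * (\<Prod>C\<in>Up. \<integral>\<^sup>+a. ennreal (\<phi> C a) \<partial>q)"
    unfolding lhs r1[symmetric] using pnaineq by (rule mult_left_mono) simp
  also have "\<dots> = (\<Prod>C\<in>U. \<integral>\<^sup>+a. ennreal (\<phi> C a) \<partial>q)"
    unfolding r0[symmetric] Uun using fin0 Udis by (rule prod.union_disjoint[symmetric])
  finally show ?thesis .
qed


definition addf :: "('v \<Rightarrow> real) \<Rightarrow> ('v \<Rightarrow> real) \<Rightarrow> ('v \<Rightarrow> real)" where
  "addf a b = (\<lambda>x. a x + b x)"

lemma addf_mono1: "a \<le> a' \<Longrightarrow> addf a b \<le> addf a' b"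
  unfolding addf_def le_fun_def by auto
lemma addf_mono2: "b \<le> b' \<Longrightarrow> addf a b \<le> addf a b'"
  unfolding addf_def le_fun_def by auto
lemma projS: "a \<in> Mem S \<Longrightarrow> proj C (addf a b) = proj C (addf (proj (C \<inter> S) a) b)"
  unfolding addf_def proj_def Mem_def by auto
lemma projT: "b \<in> Mem T \<Longrightarrow> proj C (addf a b) = proj C (addf a (proj (C \<inter> T) b))"
  unfolding addf_def proj_def Mem_def by auto

lemma lemM:
  fixes f :: "'v set \<Rightarrow> ('v \<Rightarrow> real) \<Rightarrow> real"
  assumes ST: "S \<inter> T = {}" and fS: "finite S" and fT: "finite T"
  and s1: "set_pmf p1 \<subseteq> Mem S" and s2: "set_pmf p2 \<subseteq> Mem T"
  and pna1: "PNA S p1 SS" and pna2: "PNA T p2 TT"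
  and co: "coarsens U (SS \<union> TT)"
  and dir: "(\<forall>A\<in>U. nondec_on A (f A)) \<or> (\<forall>A\<in>U. noninc_on A (f A))"
  and bnd: "\<forall>A\<in>U. \<forall>m\<in>Mem A. f A m \<le> K"
  shows "(\<integral>\<^sup>+m. (\<Prod>A\<in>U. ennreal (f A (proj A m))) \<partial>map_pmf (\<lambda>(b,a). addf a b) (pair_pmf p2 p1))
      \<le> (\<Prod>A\<in>U. \<integral>\<^sup>+m. ennreal (f A (proj A m)) \<partial>map_pmf (\<lambda>(b,a). addf a b) (pair_pmf p2 p1))"
proof -
  have SSs: "\<Union>SS \<subseteq> S" using PNA_D[OF pna1] by blast
  have TTs: "\<Union>TT \<subseteq> T" using PNA_D[OF pna2] by blast
  have partU: "is_partition U" and unU: "\<Union>U = \<Union>SS \<union> \<Union>TT"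
    and subU: "\<forall>C\<in>U. \<exists>F\<subseteq>SS \<union> TT. C = \<Union>F" using co unfolding coarsens_def by auto
  have finU: "finite U"
  proof (rule finite_subset)
    show "U \<subseteq> Pow (S \<union> T)" using unU SSs TTs by blast
    show "finite (Pow (S \<union> T))" using fS fT by simp
  qed
  have unS: "\<Union>U \<inter> S = \<Union>SS" using unU SSs TTs ST by blast
  have unT: "\<Union>U \<inter> T = \<Union>TT" using unU SSs TTs ST by blast
  have subS: "\<forall>C\<in>U. \<exists>F\<subseteq>SS. C \<inter> S = \<Union>F"
  proof
    fix C assume "C \<in> U"
    then obtain F where F: "F \<subseteq> SS \<union> TT" "C = \<Union>F" using subU by blast
    have "C \<inter> S = \<Union>(F \<inter> SS)" using F SSs TTs ST by blast
    then show "\<exists>F\<subseteq>SS. C \<inter> S = \<Union>F" by blast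
  qed
  have subT: "\<forall>C\<in>U. \<exists>F\<subseteq>TT. C \<inter> T = \<Union>F"
  proof
    fix C assume "C \<in> U"
    then obtain F where F: "F \<subseteq> SS \<union> TT" "C = \<Union>F" using subU by blast
    have "C \<inter> T = \<Union>(F \<inter> TT)" using F SSs TTs ST by blast
    then show "\<exists>F\<subseteq>TT. C \<inter> T = \<Union>F" by blast
  qed
  have fnn: "\<forall>C\<in>U. \<forall>m\<in>Mem C. 0 \<le> f C m" using dir unfolding nondec_on_def noninc_on_def by blast
  have monoF: "(\<forall>C\<in>U. \<forall>m\<in>Mem C. \<forall>m'\<in>Mem C. m \<le> m' \<longrightarrow> f C m \<le> f C m')
     \<or> (\<forall>C\<in>U. \<forall>m\<in>Mem C. \<forall>m'\<in>Mem C. m \<le> m' \<longrightarrow> f C m' \<le> f C m)"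
    using dir unfolding nondec_on_def noninc_on_def by blast
  define F where "F C a b = f C (proj C (addf a b))" for C a b
  define H where "H C b = (\<integral>\<^sup>+a. ennreal (F C a b) \<partial>p1)" for C b
  have Fnn: "0 \<le> F C a b" if "C \<in> U" for C a b using fnn that proj_Mem unfolding F_def by blast
  have Fb: "F C a b \<le> K" if "C \<in> U" for C a b using bnd that proj_Mem unfolding F_def by blast
  have Hfin: "H C b < top" if "C \<in> U" for C b
  proof -
    have "H C b \<le> (\<integral>\<^sup>+a. ennreal K \<partial>p1)" unfolding H_def
      using Fb[OF that] by (intro nn_integral_mono) (simp add: ennreal_leI)
    also have "\<dots> = ennreal K" by (simp add: measure_pmf.emeasure_space_1)
    finally show ?thesis using le_less_trans by fastforce
  qed
  have step1: "(\<integral>\<^sup>+a. (\<Prod>C\<in>U. ennreal (F C a b)) \<partial>p1) \<le> (\<Prod>C\<in>U. H C b)" if b: "b \<in> Mem T" for b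
    unfolding H_def
  proof (rule lemL[OF pna1 s1 partU finU unS subS])
    show "\<forall>C\<in>U. \<forall>a\<in>Mem S. F C a b = F C (proj (C \<inter> S) a) b"
      unfolding F_def using projS by metis
    show "\<forall>C\<in>U. \<forall>a\<in>Mem S. 0 \<le> F C a b" using Fnn by blast
    show "(\<forall>C\<in>U. \<forall>a\<in>Mem S. \<forall>a'\<in>Mem S. a \<le> a' \<longrightarrow> F C a b \<le> F C a' b) \<or>
          (\<forall>C\<in>U. \<forall>a\<in>Mem S. \<forall>a'\<in>Mem S. a \<le> a' \<longrightarrow> F C a' b \<le> F C a b)"
      using monoF unfolding F_def by (meson proj_Mem proj_mono addf_mono1)
  qed
  define G where "G C b = enn2real (H C b)" for C b
  have GH: "ennreal (G C b) = H C b" if "C \<in> U" for C b using Hfin[OF that] unfolding G_def by simp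
  have Hmono1: "H C b \<le> H C b'" if "\<forall>m\<in>Mem C. \<forall>m'\<in>Mem C. m \<le> m' \<longrightarrow> f C m \<le> f C m'" "b \<le> b'" for C b b'
    unfolding H_def F_def using that by (intro nn_integral_mono ennreal_leI) (simp add: proj_Mem proj_mono addf_mono2)
  have Hmono2: "H C b' \<le> H C b" if "\<forall>m\<in>Mem C. \<forall>m'\<in>Mem C. m \<le> m' \<longrightarrow> f C m' \<le> f C m" "b \<le> b'" for C b b'
    unfolding H_def F_def using that by (intro nn_integral_mono ennreal_leI) (simp add: proj_Mem proj_mono addf_mono2)
  have step2: "(\<integral>\<^sup>+b. (\<Prod>C\<in>U. ennreal (G C b)) \<partial>p2) \<le> (\<Prod>C\<in>U. \<integral>\<^sup>+b. ennreal (G C b) \<partial>p2)"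
  proof (rule lemL[OF pna2 s2 partU finU unT subT])
    show "\<forall>C\<in>U. \<forall>b\<in>Mem T. G C b = G C (proj (C \<inter> T) b)"
    proof (intro ballI)
      fix C b assume "C \<in> U" "b \<in> Mem T"
      then have "H C b = H C (proj (C \<inter> T) b)" unfolding H_def F_def
        using projT by metis
      then show "G C b = G C (proj (C \<inter> T) b)" unfolding G_def by simp
    qed
    show "\<forall>C\<in>U. \<forall>b\<in>Mem T. 0 \<le> G C b" unfolding G_def by simp
    show "(\<forall>C\<in>U. \<forall>b\<in>Mem T. \<forall>b'\<in>Mem T. b \<le> b' \<longrightarrow> G C b \<le> G C b') \<or>
          (\<forall>C\<in>U. \<forall>b\<in>Mem T. \<forall>b'\<in>Mem T. b \<le> b' \<longrightarrow> G C b' \<le> G C b)"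
      using monoF Hmono1 Hmono2 Hfin unfolding G_def by (meson enn2real_mono)
  qed
  have "(\<integral>\<^sup>+m. (\<Prod>A\<in>U. ennreal (f A (proj A m))) \<partial>map_pmf (\<lambda>(b,a). addf a b) (pair_pmf p2 p1))
      = (\<integral>\<^sup>+b. \<integral>\<^sup>+a. (\<Prod>C\<in>U. ennreal (F C a b)) \<partial>p1 \<partial>p2)"
    unfolding F_def by (simp add: nn_integral_pair_pmf')
  also have "\<dots> \<le> (\<integral>\<^sup>+b. (\<Prod>C\<in>U. H C b) \<partial>p2)"
    using step1 s2 by (intro nn_integral_mono_AE AE_pmfI) auto
  also have "\<dots> = (\<integral>\<^sup>+b. (\<Prod>C\<in>U. ennreal (G C b)) \<partial>p2)"
    using GH by (simp)
  also have "\<dots> \<le> (\<Prod>C\<in>U. \<integral>\<^sup>+b. ennreal (G C b) \<partial>p2)" by (rule step2)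
  also have "\<dots> = (\<Prod>C\<in>U. \<integral>\<^sup>+b. H C b \<partial>p2)" using GH by simp
  also have "\<dots> = (\<Prod>A\<in>U. \<integral>\<^sup>+m. ennreal (f A (proj A m)) \<partial>map_pmf (\<lambda>(b,a). addf a b) (pair_pmf p2 p1))"
    unfolding H_def F_def by (simp add: nn_integral_pair_pmf')
  finally show ?thesis .
qed


lemma lemM2:
  fixes f :: "'v set \<Rightarrow> ('v \<Rightarrow> real) \<Rightarrow> real"
  assumes ST: "S \<inter> T = {}" and fS: "finite S" and fT: "finite T"
  and s1: "set_pmf p1 \<subseteq> Mem S" and s2: "set_pmf p2 \<subseteq> Mem T"
  and pna1: "PNA S p1 SS" and pna2: "PNA T p2 TT"
  and co: "coarsens U (SS \<union> TT)"
  and dir: "(\<forall>A\<in>U. nondec_on A (f A)) \<or> (\<forall>A\<in>U. noninc_on A (f A))"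
  shows "(\<integral>\<^sup>+m. (\<Prod>A\<in>U. ennreal (f A (proj A m))) \<partial>map_pmf (\<lambda>(b,a). addf a b) (pair_pmf p2 p1))
      \<le> (\<Prod>A\<in>U. \<integral>\<^sup>+m. ennreal (f A (proj A m)) \<partial>map_pmf (\<lambda>(b,a). addf a b) (pair_pmf p2 p1))"
proof -
  define Q where "Q = map_pmf (\<lambda>(b,a). addf a b) (pair_pmf p2 p1)"
  define fn where "fn n A m = min (f A m) (real n)" for n :: nat and A and m
  have SSs: "\<Union>SS \<subseteq> S" using PNA_D[OF pna1] by blast
  have TTs: "\<Union>TT \<subseteq> T" using PNA_D[OF pna2] by blast
  have unU: "\<Union>U = \<Union>SS \<union> \<Union>TT" using co unfolding coarsens_def by auto
  have finU: "finite U"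
  proof (rule finite_subset)
    show "U \<subseteq> Pow (S \<union> T)" using unU SSs TTs by blast
    show "finite (Pow (S \<union> T))" using fS fT by simp
  qed
  have fnn: "\<forall>C\<in>U. \<forall>m\<in>Mem C. 0 \<le> f C m" using dir unfolding nondec_on_def noninc_on_def by blast
  have each: "(\<integral>\<^sup>+m. (\<Prod>A\<in>U. ennreal (fn n A (proj A m))) \<partial>Q)
      \<le> (\<Prod>A\<in>U. \<integral>\<^sup>+m. ennreal (fn n A (proj A m)) \<partial>Q)" for n
    unfolding Q_def
  proof (rule lemM[OF ST fS fT s1 s2 pna1 pna2 co, where K="real n"])
    show "(\<forall>A\<in>U. nondec_on A (fn n A)) \<or> (\<forall>A\<in>U. noninc_on A (fn n A))"
      using dir
    proof (elim disjE)
      assume "\<forall>A\<in>U. nondec_on A (f A)"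
      then have "\<forall>A\<in>U. nondec_on A (fn n A)"
        unfolding nondec_on_def fn_def by (fastforce intro: min.mono)
      then show ?thesis by blast
    next
      assume "\<forall>A\<in>U. noninc_on A (f A)"
      then have "\<forall>A\<in>U. noninc_on A (fn n A)"
        unfolding noninc_on_def fn_def by (fastforce intro: min.mono)
      then show ?thesis by blast
    qed
    show "\<forall>A\<in>U. \<forall>m\<in>Mem A. fn n A m \<le> real n" unfolding fn_def by simp
  qed
  have le: "(\<Prod>A\<in>U. \<integral>\<^sup>+m. ennreal (fn n A (proj A m)) \<partial>Q) \<le> (\<Prod>A\<in>U. \<integral>\<^sup>+m. ennreal (f A (proj A m)) \<partial>Q)" for n
    unfolding fn_def by (intro prod_mono_ennreal nn_integral_mono ennreal_leI) simp
  have pw: "(\<Prod>A\<in>U. ennreal (f A (proj A m))) = (SUP n. \<Prod>A\<in>U. ennreal (fn n A (proj A m)))" for m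
  proof (rule antisym)
    define N where "N = nat \<lceil>\<Sum>A\<in>U. f A (proj A m)\<rceil>"
    have "f A (proj A m) \<le> real N" if "A \<in> U" for A
    proof -
      have "f A (proj A m) \<le> (\<Sum>A\<in>U. f A (proj A m))"
        using that finU fnn proj_Mem by (intro member_le_sum) auto
      also have "\<dots> \<le> real N" unfolding N_def by linarith
      finally show ?thesis .
    qed
    then have "(\<Prod>A\<in>U. ennreal (f A (proj A m))) = (\<Prod>A\<in>U. ennreal (fn N A (proj A m)))"
      unfolding fn_def by (intro prod.cong) auto
    then show "(\<Prod>A\<in>U. ennreal (f A (proj A m))) \<le> (SUP n. \<Prod>A\<in>U. ennreal (fn n A (proj A m)))"
      using SUP_upper[of N UNIV "\<lambda>n. \<Prod>A\<in>U. ennreal (fn n A (proj A m))"] by simp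
    show "(SUP n. \<Prod>A\<in>U. ennreal (fn n A (proj A m))) \<le> (\<Prod>A\<in>U. ennreal (f A (proj A m)))"
      unfolding fn_def by (intro SUP_least prod_mono_ennreal ennreal_leI) simp
  qed
  have inc: "incseq (\<lambda>n m. \<Prod>A\<in>U. ennreal (fn n A (proj A m)))"
    unfolding incseq_def le_fun_def fn_def
    by (auto intro!: prod_mono_ennreal ennreal_leI simp: min_def)
  have "(\<integral>\<^sup>+m. (\<Prod>A\<in>U. ennreal (f A (proj A m))) \<partial>Q)
      = (\<integral>\<^sup>+m. (SUP n. \<Prod>A\<in>U. ennreal (fn n A (proj A m))) \<partial>Q)" using pw by simp
  also have "\<dots> = (SUP n. \<integral>\<^sup>+m. (\<Prod>A\<in>U. ennreal (fn n A (proj A m))) \<partial>Q)"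
    using inc by (intro nn_integral_monotone_convergence_SUP) auto
  also have "\<dots> \<le> (\<Prod>A\<in>U. \<integral>\<^sup>+m. ennreal (f A (proj A m)) \<partial>Q)"
    using each le by (intro SUP_least) (meson order_trans)
  finally show ?thesis unfolding Q_def .
qed

lemma addf_proj:
  assumes "a \<in> Mem S" "b \<in> Mem T" "S \<inter> T = {}"
  shows "proj S (addf a b) = a" "proj T (addf a b) = b"
  using assms unfolding addf_def proj_def Mem_def by (auto simp: fun_eq_iff)

lemma addf_Mem: "a \<in> Mem S \<Longrightarrow> b \<in> Mem T \<Longrightarrow> addf a b \<in> Mem (S \<union> T)"
  unfolding addf_def Mem_def by auto

lemma indep_char:
  assumes ST: "S \<inter> T = {}" and s1: "set_pmf p1 \<subseteq> Mem S" and s2: "set_pmf p2 \<subseteq> Mem T"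
  and mu: "mu \<in> indep_prod (S, p1) (T, p2)"
  shows "mu = (S \<union> T, map_pmf (\<lambda>(b,a). addf a b) (pair_pmf p2 p1))"
proof -
  define Q where "Q = map_pmf (\<lambda>(b,a). addf a b) (pair_pmf p2 p1)"
  obtain p where mu: "mu = (S \<union> T, p)" and sp: "set_pmf p \<subseteq> Mem (S \<union> T)"
    and pe: "\<forall>x\<in>Mem (S \<union> T). pmf p x = pmf p1 (proj S x) * pmf p2 (proj T x)"
    using mu ST unfolding indep_prod_def Let_def by auto
  have sQ: "set_pmf Q \<subseteq> Mem (S \<union> T)" unfolding Q_def using s1 s2
    by (auto simp: set_pair_pmf intro!: addf_Mem)
  have "p = Q"
  proof (rule pmf_eqI)
    fix x
    show "pmf p x = pmf Q x"
    proof (cases "x \<in> Mem (S \<union> T)")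
      case False
      then have "x \<notin> set_pmf p" "x \<notin> set_pmf Q" using sp sQ by auto
      then show ?thesis by (simp add: set_pmf_iff)
    next
      case True
      define a0 where "a0 = proj S x"
      define b0 where "b0 = proj T x"
      have x: "x = addf a0 b0" using True ST unfolding a0_def b0_def addf_def proj_def Mem_def
        by (auto simp: fun_eq_iff)
      show ?thesis
      proof (cases "(b0, a0) \<in> set_pmf (pair_pmf p2 p1)")
        case True
        have inj: "inj_on (\<lambda>(b,a). addf a b) (set_pmf (pair_pmf p2 p1))"
        proof (rule inj_onI, clarsimp simp: set_pair_pmf)
          fix b a b' a' assume h: "b \<in> set_pmf p2" "a \<in> set_pmf p1" "b' \<in> set_pmf p2" "a' \<in> set_pmf p1"
            "addf a b = addf a' b'"
          then show "b = b' \<and> a = a'" using addf_proj[OF _ _ ST] s1 s2 by (metis subsetD)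
        qed
        have "pmf Q x = pmf (pair_pmf p2 p1) (b0, a0)" unfolding Q_def x
          using pmf_map_inj[OF inj True] by simp
        also have "\<dots> = pmf p x" using pe \<open>x \<in> Mem (S \<union> T)\<close> unfolding a0_def b0_def by (simp add: pmf_pair)
        finally show ?thesis by simp
      next
        case False
        then have "pmf p x = 0" using pe \<open>x \<in> Mem (S \<union> T)\<close> unfolding a0_def b0_def
          by (auto simp: set_pair_pmf set_pmf_iff)
        moreover have "x \<notin> set_pmf Q"
        proof
          assume "x \<in> set_pmf Q"
          then obtain a b where ab: "a \<in> set_pmf p1" "b \<in> set_pmf p2" "x = addf a b"
            unfolding Q_def by (auto simp: set_pair_pmf)
          have "a \<in> Mem S" "b \<in> Mem T" using ab s1 s2 by auto
          then have "a = a0" "b = b0" unfolding a0_def b0_def using ab(3) addf_proj[OF _ _ ST] by simp_all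
          then show False using False ab by (simp add: set_pair_pmf)
        qed
        ultimately show ?thesis by (simp add: set_pmf_iff)
      qed
    qed
  qed
  then show ?thesis using mu Q_def by simp
qed

lemma lemPNA:
  assumes ST: "S \<inter> T = {}" and fS: "finite S" and fT: "finite T"
  and s1: "set_pmf p1 \<subseteq> Mem S" and s2: "set_pmf p2 \<subseteq> Mem T"
  and pna1: "PNA S p1 SS" and pna2: "PNA T p2 TT"
  shows "PNA (S \<union> T) (map_pmf (\<lambda>(b,a). addf a b) (pair_pmf p2 p1)) (SS \<union> TT)"
proof -
  have SSs: "\<Union>SS \<subseteq> S" using PNA_D[OF pna1] by (rule conjunct2)
  have pS: "is_partition SS" using PNA_D[OF pna1] by (rule conjunct1)
  have TTs: "\<Union>TT \<subseteq> T" using PNA_D[OF pna2] by (rule conjunct2)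
  have pT: "is_partition TT" using PNA_D[OF pna2] by (rule conjunct1)
  have pU: "is_partition (SS \<union> TT)"
    unfolding is_partition_def
  proof (intro conjI ballI impI)
    fix A assume "A \<in> SS \<union> TT" then show "A \<noteq> {}"
      using pS pT part_ne by blast
  next
    fix A B assume A: "A \<in> SS \<union> TT" and B: "B \<in> SS \<union> TT" and AB: "A \<noteq> B"
    show "A \<inter> B = {}"
    proof (cases "A \<in> SS")
      case True
      show ?thesis
      proof (cases "B \<in> SS")
        case True
        then show ?thesis using \<open>A \<in> SS\<close> AB pS part_dis by blast
      next
        case False
        then have "B \<subseteq> T" using B TTs by blast
        moreover have "A \<subseteq> S" using \<open>A \<in> SS\<close> SSs by blast
        ultimately show ?thesis using ST by blast
      qed
    next
      case False
      then have "A \<subseteq> T" "A \<in> TT" using A TTs by blast+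
      show ?thesis
      proof (cases "B \<in> SS")
        case True
        then have "B \<subseteq> S" using SSs by blast
        then show ?thesis using \<open>A \<subseteq> T\<close> ST by blast
      next
        case False
        then have "B \<in> TT" using B by blast
        then show ?thesis using \<open>A \<in> TT\<close> AB pT part_dis by blast
      qed
    qed
  qed
  have uU: "\<Union>(SS \<union> TT) \<subseteq> S \<union> T" using SSs TTs by blast
  show ?thesis unfolding PNA_def
  proof (intro conjI allI impI pU uU)
    fix U f assume h: "coarsens U (SS \<union> TT) \<and>
        ((\<forall>A\<in>U. nondec_on A (f A)) \<or> (\<forall>A\<in>U. noninc_on A (f A)))"
    have co: "coarsens U (SS \<union> TT)" using h by (rule conjunct1)
    have dir: "(\<forall>A\<in>U. nondec_on A (f A)) \<or> (\<forall>A\<in>U. noninc_on A (f A))" using h by (rule conjunct2)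
    show "(\<integral>\<^sup>+m. (\<Prod>A\<in>U. ennreal (f A (proj A m))) \<partial>map_pmf (\<lambda>(b,a). addf a b) (pair_pmf p2 p1))
      \<le> (\<Prod>A\<in>U. \<integral>\<^sup>+m. ennreal (f A (proj A m)) \<partial>map_pmf (\<lambda>(b,a). addf a b) (pair_pmf p2 p1))"
      by (rule lemM2[OF ST fS fT s1 s2 pna1 pna2 co dir])
  qed
qed

theorem mainTheorem8:
  shows "(\<forall>(S::'v set) T p1 p2 SS TT.
            finite S \<and> finite T \<and> S \<inter> T = {} \<and>
            set_pmf p1 \<subseteq> Mem S \<and> set_pmf p2 \<subseteq> Mem T \<and>
            is_partition SS \<and> \<Union>SS \<subseteq> S \<and> is_partition TT \<and> \<Union>TT \<subseteq> T \<and>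
            PNA S p1 SS \<and> PNA T p2 TT \<longrightarrow>
            (\<forall>mu\<in>indep_prod (S, p1) (T, p2). PNA (fst mu) (snd mu) (SS \<union> TT)))
       \<and> (\<forall>mu1\<in>(Xdist :: ('v set \<times> ('v \<Rightarrow> real) pmf) set). \<forall>mu2\<in>Xdist.
            indep_prod mu1 mu2 \<subseteq> oplus mu1 mu2)"
proof (intro conjI allI impI ballI subsetI)
  fix S T :: "'v set" and p1 p2 SS TT mu
  assume h: "finite S \<and> finite T \<and> S \<inter> T = {} \<and>
            set_pmf p1 \<subseteq> Mem S \<and> set_pmf p2 \<subseteq> Mem T \<and>
            is_partition SS \<and> \<Union>SS \<subseteq> S \<and> is_partition TT \<and> \<Union>TT \<subseteq> T \<and>
            PNA S p1 SS \<and> PNA T p2 TT"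
    and mu: "mu \<in> indep_prod (S, p1) (T, p2)"
  then show "PNA (fst mu) (snd mu) (SS \<union> TT)"
    using indep_char[of S T p1 p2 mu] lemPNA[of S T p1 p2 SS TT] by auto
next
  fix mu1 mu2 mu :: "'v set \<times> ('v \<Rightarrow> real) pmf"
  assume m1: "mu1 \<in> Xdist" and m2: "mu2 \<in> Xdist" and mu: "mu \<in> indep_prod mu1 mu2"
  obtain S p1 where mu1: "mu1 = (S, p1)" and fS: "finite S" and s1: "set_pmf p1 \<subseteq> Mem S"
    using m1 unfolding Xdist_def by auto
  obtain T p2 where mu2: "mu2 = (T, p2)" and fT: "finite T" and s2: "set_pmf p2 \<subseteq> Mem T"
    using m2 unfolding Xdist_def by auto
  have ST: "S \<inter> T = {}" using mu unfolding mu1 mu2 indep_prod_def Let_def by (auto split: if_splits)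
  define Q where "Q = map_pmf (\<lambda>(b,a). addf a b) (pair_pmf p2 p1)"
  have muQ: "mu = (S \<union> T, Q)" using indep_char[OF ST s1 s2] mu unfolding mu1 mu2 Q_def by simp
  have sQ: "set_pmf Q \<subseteq> Mem (S \<union> T)" unfolding Q_def using s1 s2
    by (auto simp: set_pair_pmf intro!: addf_Mem)
  have marg1: "map_pmf (proj S) Q = p1"
  proof -
    have "map_pmf (proj S) Q = map_pmf snd (pair_pmf p2 p1)" unfolding Q_def map_pmf_comp
      using s1 s2 addf_proj[OF _ _ ST] by (intro map_pmf_cong) (auto simp: set_pair_pmf subset_iff)
    then show ?thesis by (simp add: map_snd_pair_pmf)
  qed
  have marg2: "map_pmf (proj T) Q = p2"
  proof -
    have "map_pmf (proj T) Q = map_pmf fst (pair_pmf p2 p1)" unfolding Q_def map_pmf_comp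
      using s1 s2 addf_proj[OF _ _ ST] by (intro map_pmf_cong) (auto simp: set_pair_pmf subset_iff)
    then show ?thesis by (simp add: map_fst_pair_pmf)
  qed
  have pna: "PNA (S \<union> T) Q (SS \<union> TT)" if "PNA S p1 SS" "PNA T p2 TT" for SS TT
    unfolding Q_def using lemPNA[OF ST fS fT s1 s2 that] .
  have P: "\<forall>SS TT. is_partition SS \<and> \<Union>SS \<subseteq> S \<and> is_partition TT \<and> \<Union>TT \<subseteq> T \<and>
           PNA S p1 SS \<and> PNA T p2 TT \<longrightarrow> PNA (S \<union> T) Q (SS \<union> TT)"
    by (intro allI impI, elim conjE) (rule pna)
  have mem: "(S \<union> T, Q) \<in> {(S \<union> T, p) | p. set_pmf p \<subseteq> Mem (S \<union> T) \<and>
        map_pmf (proj S) p = p1 \<and> map_pmf (proj T) p = p2 \<and>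
        (\<forall>SS TT. is_partition SS \<and> \<Union>SS \<subseteq> S \<and> is_partition TT \<and> \<Union>TT \<subseteq> T \<and>
           PNA S p1 SS \<and> PNA T p2 TT \<longrightarrow> PNA (S \<union> T) p (SS \<union> TT))}"
    unfolding mem_Collect_eq by (rule exI[of _ Q]) (intro conjI refl sQ marg1 marg2 P)
  have e: "\<And>X::('v set \<times> ('v \<Rightarrow> real) pmf) set. (if S \<inter> T \<noteq> {} then {} else X) = X"
    using ST by simp
  show "mu \<in> oplus mu1 mu2"
    unfolding mu1 mu2 muQ oplus_def Let_def fst_conv snd_conv e by (rule mem)
qed

end
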